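(* Let $\sigma$ be any function from atoms to atoms. Then for every context $\Gamma$ and formula $A$, the sequent $\Gamma\vdash A$ is derivable if and only if $\mathrm{fr}(\Gamma)=\mathrm{fr}(A)$ and the sequent $\sigma\Gamma\vdash\sigma A$ is derivable.
   Context: Formulas are built from atoms ($p,q,\dots$) by a binary product: every formula is an atom or $A\bullet B$. A context is a finite (possibly empty) list of formulas; commas denote concatenation. The sequent calculus has exactly four rules (no weakening, contraction or exchange): ($\bullet L$) from $A,B,\Delta\vdash C$ infer $A\bullet B,\Delta\vdash C$ (the product must be leftmost); ($\bullet R$) from $\Gamma\vdash A$ and $\Delta\vdash B$ infer $\Gamma,\Delta\vdash A\bullet B$; ($id$) $A\vdash A$; ($cut$) from $\Theta\vdash A$ and $\Gamma,A,\Delta\vdash B$ infer $\Gamma,\Theta,\Delta\vdash B$; derivable means conclusion of a finite derivation tree with no undischarged premises. The frontier is the ordered list of atom occurrences: $\mathrm{fr}(p)=p$, $\mathrm{fr}(A\bullet B)=\mathrm{fr}(A),\mathrm{fr}(B)$, and the frontier of a context is the concatenation of the frontiers of its formulas. $\sigma A$, $\sigma\Gamma$ denote the result of replacing each atom $p$ by $\sigma(p)$. *)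

theory Defs
  imports Main
begin

datatype 'a form = Atom 'a | Prod "'a form" "'a form"

fun fr :: "'a form \<Rightarrow> 'a list" where
  "fr (Atom p) = [p]"
| "fr (Prod A B) = fr A @ fr B"

definition frc :: "'a form list \<Rightarrow> 'a list" where
  "frc \<Gamma> = concat (map fr \<Gamma>)"

fun subst :: "('a \<Rightarrow> 'a) \<Rightarrow> 'a form \<Rightarrow> 'a form" where
  "subst \<sigma> (Atom p) = Atom (\<sigma> p)"
| "subst \<sigma> (Prod A B) = Prod (subst \<sigma> A) (subst \<sigma> B)"

inductive derivable :: "'a form list \<Rightarrow> 'a form \<Rightarrow> bool" where
  prodL: "derivable (A # B # \<Delta>) C \<Longrightarrow> derivable (Prod A B # \<Delta>) C"
| prodR: "derivable \<Gamma> A \<Longrightarrow> derivable \<Delta> B \<Longrightarrow> derivable (\<Gamma> @ \<Delta>) (Prod A B)"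
| ident: "derivable [A] A"
| cut: "derivable \<Theta> A \<Longrightarrow> derivable (\<Gamma> @ [A] @ \<Delta>) B \<Longrightarrow> derivable (\<Gamma> @ \<Theta> @ \<Delta>) B"

end

theory Submission
  imports Defs
begin

lemma fr_subst: "fr (subst s A) = map s (fr A)"
  by (induction A) auto

lemma frc_map: "frc (map (subst s) G) = map s (frc G)"
  by (induction G) (auto simp: frc_def fr_subst)

lemma frc_append[simp]: "frc (G @ D) = frc G @ frc D"
  by (simp add: frc_def)

lemma frc_Cons[simp]: "frc (A # G) = fr A @ frc G"
  by (simp add: frc_def)

lemma frc_Nil[simp]: "frc [] = []"
  by (simp add: frc_def)

lemma der_fr: "derivable G A \<Longrightarrow> frc G = fr A"
  by (induction rule: derivable.induct) auto

lemma der_subst: "derivable G A \<Longrightarrow> derivable (map (subst s) G) (subst s A)"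
proof (induction rule: derivable.induct)
  case (prodL A B D C) then show ?case by (auto intro: derivable.prodL)
next
  case (prodR G A D B) then show ?case by (auto dest: derivable.prodR)
next
  case (ident A) then show ?case by (auto intro: derivable.ident)
next
  case (cut T A G D B) then show ?case using derivable.cut by fastforce
qed

lemma subst_inj: "subst s X = subst s Y \<Longrightarrow> fr X = fr Y \<Longrightarrow> X = Y"
proof (induction X arbitrary: Y)
  case (Atom p) then show ?case by (cases Y) auto
next
  case (Prod A B)
  then obtain A' B' where Y: "Y = Prod A' B'" by (cases Y) auto
  with Prod.prems have e: "subst s A = subst s A'" "subst s B = subst s B'" by auto
  have "length (fr A) = length (fr A')"
    using arg_cong[OF e(1), of "\<lambda>x. length (fr x)"] by (simp add: fr_subst)
  with Prod.prems Y have "fr A = fr A'" "fr B = fr B'" by auto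
  with Prod.IH e Y show ?case by auto
qed

fun relabel :: "'a form \<Rightarrow> 'a list \<Rightarrow> 'a form" where
  "relabel (Atom p) l = Atom (hd l)"
| "relabel (Prod A B) l = Prod (relabel A (take (length (fr A)) l)) (relabel B (drop (length (fr A)) l))"

lemma fr_pos: "fr X \<noteq> []"
  by (induction X) auto

lemma relabel_fr: "length l = length (fr X) \<Longrightarrow> fr (relabel X l) = l"
proof (induction X arbitrary: l)
  case (Atom p) then show ?case by (cases l) auto
next
  case (Prod A B) then show ?case by auto
qed

lemma relabel_subst: "map s l = fr X \<Longrightarrow> subst s (relabel X l) = X"
proof (induction X arbitrary: l)
  case (Atom p) then show ?case by (cases l) auto
next
  case (Prod A B)
  have "map s (take (length (fr A)) l) = fr A" "map s (drop (length (fr A)) l) = fr B"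
    using Prod.prems by (simp_all add: take_map[symmetric] drop_map[symmetric])
  with Prod.IH show ?case by auto
qed

lemma lift: "derivable G A \<Longrightarrow> map (subst s) G' = G \<Longrightarrow> subst s A' = A \<Longrightarrow> frc G' = fr A'
  \<Longrightarrow> derivable G' A'"
proof (induction arbitrary: G' A' rule: derivable.induct)
  case (prodL A B D C)
  then obtain P D' where G': "G' = P # D'" "subst s P = Prod A B" "map (subst s) D' = D" by auto
  then obtain A1 B1 where P: "P = Prod A1 B1" "subst s A1 = A" "subst s B1 = B" by (cases P) auto
  have "derivable (A1 # B1 # D') A'" using prodL G' P by auto
  then show ?case using G' P derivable.prodL by auto
next
  case (prodR G A D B)
  obtain G1 D1 where sp: "G' = G1 @ D1" "G = map (subst s) G1" "D = map (subst s) D1"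
    using prodR.prems(1) by (auto simp: map_eq_append_conv)
  obtain A1 B1 where A': "A' = Prod A1 B1" "subst s A1 = A" "subst s B1 = B"
    using prodR.prems(2) by (cases A') auto
  have "frc G = fr A" using der_fr[OF prodR.hyps(1)] .
  hence "length (frc G1) = length (fr A1)"
    using sp A' by (metis frc_map fr_subst length_map)
  moreover have "frc G1 @ frc D1 = fr A1 @ fr B1" using prodR.prems(3) sp A' by simp
  ultimately have "frc G1 = fr A1" "frc D1 = fr B1" by auto
  then show ?case using prodR.IH sp A' derivable.prodR by blast
next
  case (ident A)
  then obtain A1 where "G' = [A1]" "subst s A1 = A" by auto
  with ident have "A1 = A'" using subst_inj by auto
  then show ?case using \<open>G' = [A1]\<close> derivable.ident by auto
next
  case (cut T X G D B)
  obtain G1 T1 D1 where sp: "G' = G1 @ T1 @ D1" "G = map (subst s) G1" "T = map (subst s) T1"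
     "D = map (subst s) D1"
  proof -
    obtain G1 R where a: "G' = G1 @ R" "G = map (subst s) G1" "T @ D = map (subst s) R"
      using cut.prems(1) by (auto simp: map_eq_append_conv)
    from a(3) obtain T1 D1 where "R = T1 @ D1" "T = map (subst s) T1" "D = map (subst s) D1"
      by (metis map_eq_append_conv)
    with a that show ?thesis by blast
  qed
  define X' where "X' = relabel X (frc T1)"
  have fT: "frc T = fr X" using der_fr[OF cut.hyps(1)] .
  hence ms: "map s (frc T1) = fr X" using sp by (simp add: frc_map)
  hence "length (frc T1) = length (fr X)" by (metis length_map)
  hence fX: "fr X' = frc T1" unfolding X'_def by (rule relabel_fr)
  have sX: "subst s X' = X" unfolding X'_def using ms by (rule relabel_subst)
  have d1: "derivable T1 X'" using cut.IH(1)[of T1 X'] sp sX fX by auto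
  have d2: "derivable (G1 @ [X'] @ D1) A'" using cut.IH(2)[of "G1 @ [X'] @ D1" A'] sp sX fX cut.prems
    by auto
  show ?case using derivable.cut[OF d1 d2] sp by simp
qed

theorem proposition1p16:
  fixes \<sigma> :: "'a \<Rightarrow> 'a" and \<Gamma> :: "'a form list" and A :: "'a form"
  shows "derivable \<Gamma> A \<longleftrightarrow>
           (frc \<Gamma> = fr A \<and> derivable (map (subst \<sigma>) \<Gamma>) (subst \<sigma> A))"
  using der_fr der_subst lift by blast

end
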